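(* Let $R$ be a (unital, not necessarily commutative) ring, considered as a first-order structure in the language of rings. If either $R$ has characteristic zero or $R$ is an infinite domain (a ring without zero divisors), then $R$ does not have near linear Zarankiewicz bounds.
   Context: For a bipartite graph with vertex sorts $V,W$ and edge relation $E\subseteq V\times W$, it is $K_{m,n}$-free if it contains no complete bipartite subgraph with parts of sizes $m$ and $n$. A class $\mathcal{C}$ of finite bipartite graphs has near linear Zarankiewicz bounds if for every $m$ and every real $\varepsilon>0$ there is a real $\lambda>0$ such that every $K_{m,m}$-free member $\mathcal{G}$ of $\mathcal{C}$ has at most $\lambda|\mathcal{G}|^{1+\varepsilon}$ edges, where $|\mathcal{G}|$ is the number of vertices. A bipartite graph has near linear Zarankiewicz bounds if the class of its finite substructures does; a structure has near linear Zarankiewicz bounds if every bipartite graph definable (with parameters) in it does. *)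

theory Defs
  imports Complex_Main
begin

datatype rtm = RVar nat | RZero | ROne | RAdd rtm rtm | RNeg rtm | RSub rtm rtm | RMul rtm rtm

datatype rfm = REq rtm rtm | RNot rfm | RAnd rfm rfm | ROr rfm rfm | REx nat rfm | RAll nat rfm

primrec rtm_eval :: "rtm \<Rightarrow> (nat \<Rightarrow> 'a::ring_1) \<Rightarrow> 'a" where
  "rtm_eval (RVar i) e = e i"
| "rtm_eval RZero e = 0"
| "rtm_eval ROne e = 1"
| "rtm_eval (RAdd s t) e = rtm_eval s e + rtm_eval t e"
| "rtm_eval (RNeg s) e = - rtm_eval s e"
| "rtm_eval (RSub s t) e = rtm_eval s e - rtm_eval t e"
| "rtm_eval (RMul s t) e = rtm_eval s e * rtm_eval t e"

primrec rsat :: "rfm \<Rightarrow> (nat \<Rightarrow> 'a::ring_1) \<Rightarrow> bool" where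
  "rsat (REq s t) e = (rtm_eval s e = rtm_eval t e)"
| "rsat (RNot \<phi>) e = (\<not> rsat \<phi> e)"
| "rsat (RAnd \<phi> \<psi>) e = (rsat \<phi> e \<and> rsat \<psi> e)"
| "rsat (ROr \<phi> \<psi>) e = (rsat \<phi> e \<or> rsat \<psi> e)"
| "rsat (REx i \<phi>) e = (\<exists>a. rsat \<phi> (e(i := a)))"
| "rsat (RAll i \<phi>) e = (\<forall>a. rsat \<phi> (e(i := a)))"

text \<open>A set of n-tuples (lists of length n) is definable with parameters in the ring 'a:
  the tuple occupies variables 0..n-1, all other variables are parameters.\<close>
definition definable :: "nat \<Rightarrow> 'a::ring_1 list set \<Rightarrow> bool" where
  "definable n S \<longleftrightarrow> (\<exists>\<phi> (p :: nat \<Rightarrow> 'a).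
     S = {xs. length xs = n \<and> rsat \<phi> (\<lambda>i. if i < n then xs ! i else p i)})"

definition definable_bipartite ::
  "nat \<Rightarrow> nat \<Rightarrow> 'a::ring_1 list set \<Rightarrow> 'a list set \<Rightarrow> ('a list \<times> 'a list) set \<Rightarrow> bool" where
  "definable_bipartite n k V W E \<longleftrightarrow>
     definable n V \<and> definable k W \<and> E \<subseteq> V \<times> W \<and>
     definable (n + k) {xs @ ys | xs ys. (xs, ys) \<in> E}"

definition Kmm_free :: "nat \<Rightarrow> 'v set \<Rightarrow> 'w set \<Rightarrow> ('v \<times> 'w) set \<Rightarrow> bool" where
  "Kmm_free m V W E \<longleftrightarrow>
     \<not> (\<exists>A B. A \<subseteq> V \<and> B \<subseteq> W \<and> card A = m \<and> card B = m \<and> finite A \<and> finite B \<and> A \<times> B \<subseteq> E)"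

definition near_linear_zarankiewicz :: "'v set \<Rightarrow> 'w set \<Rightarrow> ('v \<times> 'w) set \<Rightarrow> bool" where
  "near_linear_zarankiewicz V W E \<longleftrightarrow>
     (\<forall>m::nat. \<forall>\<epsilon>::real. \<epsilon> > 0 \<longrightarrow> (\<exists>c::real. c > 0 \<and>
        (\<forall>V0 W0. finite V0 \<and> finite W0 \<and> V0 \<subseteq> V \<and> W0 \<subseteq> W \<and>
           Kmm_free m V0 W0 (E \<inter> (V0 \<times> W0)) \<longrightarrow>
           real (card (E \<inter> (V0 \<times> W0))) \<le> c * real (card V0 + card W0) powr (1 + \<epsilon>))))"

definition ring_near_linear_zarankiewicz :: "'a::ring_1 itself \<Rightarrow> bool" where
  "ring_near_linear_zarankiewicz _ \<longleftrightarrow>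
     (\<forall>n k (V :: 'a list set) W E. definable_bipartite n k V W E \<longrightarrow>
        near_linear_zarankiewicz V W E)"

definition no_zero_divisors_ring :: "'a::ring_1 itself \<Rightarrow> bool" where
  "no_zero_divisors_ring _ \<longleftrightarrow> (\<forall>a b :: 'a. a * b = 0 \<longrightarrow> a = 0 \<or> b = 0)"

end

theory Submission
  imports Defs "HOL-Computational_Algebra.Primes" "HOL-Library.FuncSet"
begin


definition LV :: "'a::ring_1 list set" where "LV = {xs. length xs = 2}"
definition LE :: "('a::ring_1 list \<times> 'a list) set" where
 "LE = {(xs, ys). length xs = 2 \<and> length ys = 2 \<and> xs!1 = ys!0 * xs!0 + ys!1}"

lemma LV_definable: "definable 2 (LV::'a::ring_1 list set)"
  unfolding definable_def LV_def
  by (rule exI[of _ "REq RZero RZero"], rule exI[of _ "\<lambda>_. 0"]) simp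

lemma len2: "length (l::'b list) = 2 \<Longrightarrow> \<exists>a b. l = [a,b]"
  by (auto simp: length_Suc_conv numeral_eq_Suc)

lemma len4: "length (l::'b list) = 4 \<Longrightarrow> \<exists>a b c d. l = [a,b,c,d]"
  by (auto simp: length_Suc_conv numeral_eq_Suc)


definition phiL :: rfm where "phiL = REq (RVar 1) (RAdd (RMul (RVar 2) (RVar 0)) (RVar 3))"

lemma phiL_sat: "rsat phiL (\<lambda>i. if i < 4 then (l::'a::ring_1 list) ! i else 0) \<longleftrightarrow> l!1 = l!2 * l!0 + l!3"
  by (simp add: phiL_def)

lemma LE_app: "{xs @ ys | xs ys. (xs, ys) \<in> (LE::('a::ring_1 list \<times> 'a list) set)} =
        {l. length l = 4 \<and> l!1 = l!2 * l!0 + l!3}"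
proof (rule set_eqI, rule iffI)
  fix l assume "l \<in> {xs @ ys | xs ys. (xs, ys) \<in> (LE::('a list \<times> 'a list) set)}"
  then obtain xs ys where l: "l = xs @ ys" "(xs, ys) \<in> LE" by blast
  from l(2) have h: "length xs = 2" "length ys = 2" "xs!1 = ys!0 * xs!0 + ys!1" by (auto simp: LE_def)
  obtain x0 x1 where xs: "xs = [x0, x1]" using len2[OF h(1)] by blast
  obtain y0 y1 where ys: "ys = [y0, y1]" using len2[OF h(2)] by blast
  show "l \<in> {l. length l = 4 \<and> l!1 = l!2 * l!0 + l!3}" using h(3) unfolding l(1) xs ys by simp
next
  fix l :: "'a list" assume "l \<in> {l. length l = 4 \<and> l!1 = l!2 * l!0 + l!3}"
  then have h: "length l = 4" "l!1 = l!2 * l!0 + l!3" by auto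
  obtain a b c d where l: "l = [a,b,c,d]" using len4[OF h(1)] by blast
  have "l = [a, b] @ [c, d]" using l by simp
  moreover have "([a, b], [c, d]) \<in> LE" using h unfolding l by (simp add: LE_def)
  ultimately show "l \<in> {xs @ ys | xs ys. (xs, ys) \<in> (LE::('a list \<times> 'a list) set)}" by blast
qed

lemma line_definable: "definable_bipartite 2 2 (LV::'a::ring_1 list set) LV LE"
proof -
  have "definable (2+2) {xs @ ys | xs ys. (xs, ys) \<in> (LE::('a list \<times> 'a list) set)}"
    unfolding definable_def LE_app
    apply (rule exI[of _ phiL], rule exI[of _ "\<lambda>_. 0"])
    using phiL_sat by (auto simp: numeral_eq_Suc) 
  moreover have "LE \<subseteq> LV \<times> LV" by (auto simp: LE_def LV_def)
  ultimately show ?thesis using LV_definable unfolding definable_bipartite_def by blast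
qed


lemma real_contra:
  fixes x y b I N c :: real
  assumes x1: "x \<ge> 1" and y0: "y > 0" and I: "I \<ge> x^2*b" and b: "4*b \<ge> y" and N0: "N \<ge> 0"
    and N: "N \<le> 2*x*y" and y: "y \<le> 4*x^2" and xc: "x > 256*c^2" and c: "c > 0"
    and up: "I \<le> c * N powr (1 + 1/6)"
  shows False
proof (cases "N = 0")
  case True
  then have "I \<le> 0" using up by simp
  moreover have "x^2*b > 0" using x1 y0 b by simp
  ultimately show False using I by linarith
next
  case False
  then have Np: "N > 0" using N0 by simp
  have e1: "N powr (1 + 1/6) = N * N powr (1/6)" using powr_add[of N 1 "1/6"] Np by simp
  have "N powr (1/6) \<le> (8*x^3) powr (1/6)"
  proof (rule powr_mono2)
    show "N \<le> 8*x^3"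
    proof -
      have "2*x*y \<le> 2*x*(4*x^2)" using y x1 by (intro mult_left_mono) auto
      then show ?thesis using N by (simp add: power2_eq_square power3_eq_cube) 
    qed
  qed (use Np in auto)
  also have "(8*x^3) powr (1/6) = 8 powr (1/6) * (x^3) powr (1/6)"
    using x1 by (simp add: powr_mult)
  also have "(x^3) powr (1/6) = sqrt x"
  proof -
    have "(x^3) powr (1/6) = (x powr 3) powr (1/6)" using x1 by (simp add: powr_realpow)
    also have "\<dots> = x powr (1/2)" by (simp add: powr_powr)
    also have "\<dots> = sqrt x" using x1 by (simp add: powr_half_sqrt)
    finally show ?thesis .
  qed
  also have "8 powr (1/6) * sqrt x \<le> 2 * sqrt x"
  proof (rule mult_right_mono)
    have "(8::real) powr (1/6) \<le> 64 powr (1/6)" by (rule powr_mono2) auto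
    also have "(64::real) = 2 powr 6" by simp
    also have "(2 powr 6) powr (1/6) = (2::real)" by (simp add: powr_powr)
    finally show "(8::real) powr (1/6) \<le> 2" .
  qed (use x1 in simp)
  finally have e2: "N powr (1/6) \<le> 2 * sqrt x" .
  have sx: "sqrt x > 0" "sqrt x * sqrt x = x" using x1 by auto
  have "x^2 * y \<le> x^2 * (4*b)" using b by (intro mult_left_mono) auto
  then have "x^2 * y / 4 \<le> I" using I by simp
  also have "I \<le> c * (N * (2 * sqrt x))"
  proof -
    have "N * N powr (1/6) \<le> N * (2 * sqrt x)" using mult_left_mono[OF e2, of N] Np by simp
    then have "c * (N * N powr (1/6)) \<le> c * (N * (2 * sqrt x))" using c by (simp add: mult_left_mono)
    then show ?thesis using up e1 by simp
  qed
  also have "\<dots> \<le> c * ((2*x*y) * (2 * sqrt x))" using c N sx by (intro mult_left_mono mult_right_mono) auto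
  finally have "x^2 * y / 4 \<le> c * ((2*x*y) * (2 * sqrt x))" .
  then have "x * (x * y) \<le> x * (16 * c * sqrt x * y)" by (simp add: power2_eq_square algebra_simps)
  then have "x * y \<le> 16 * c * sqrt x * y" using x1 by simp
  then have "x \<le> 16 * c * sqrt x" using y0 by simp
  then have "sqrt x * sqrt x \<le> (16 * c) * sqrt x" using sx by simp
  then have "sqrt x \<le> 16 * c" by (rule mult_right_le_imp_le) (use sx in auto)
  then have "sqrt x * sqrt x \<le> (16*c) * (16*c)" using sx c by (intro mult_mono) auto
  then have "x \<le> 256 * c^2" using sx by (simp add: power2_eq_square)
  then show False using xc by simp
qed


definition good_config :: "'a::ring_1 set \<Rightarrow> 'a set \<Rightarrow> 'a set \<Rightarrow> bool" where
  "good_config X B Y \<longleftrightarrow> finite X \<and> finite B \<and> finite Y \<and> B \<noteq> {} \<and>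
      (\<forall>a\<in>X. \<forall>x\<in>X. \<forall>b\<in>B. a*x+b \<in> Y) \<and>
      (\<forall>a\<in>X. \<forall>a'\<in>X. \<forall>x\<in>X. \<forall>x'\<in>X. x \<noteq> x' \<longrightarrow> a*(x-x') = a'*(x-x') \<longrightarrow> a = a') \<and>
      card Y \<le> 4 * card B \<and> card B \<le> card Y \<and> card Y \<le> 4 * card X ^ 2"

lemma config_kmm_free:
  assumes g: "good_config X B Y"
  defines "V0 \<equiv> (\<lambda>(x,y). [x,y]) ` (X \<times> Y)" and "W0 \<equiv> (\<lambda>(a,b). [a,b]) ` (X \<times> B)"
  shows "Kmm_free 2 V0 W0 (LE \<inter> (V0 \<times> W0))"
  unfolding Kmm_free_def
proof
  assume "\<exists>A B'. A \<subseteq> V0 \<and> B' \<subseteq> W0 \<and> card A = 2 \<and> card B' = 2 \<and> finite A \<and> finite B' \<and> A \<times> B' \<subseteq> LE \<inter> (V0 \<times> W0)"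
  then obtain A B' where AB: "A \<subseteq> V0" "B' \<subseteq> W0" "card A = 2" "card B' = 2" "A \<times> B' \<subseteq> LE" by blast
  obtain p1 p2 where A: "A = {p1, p2}" "p1 \<noteq> p2" using AB(3) card_2_iff by metis
  obtain l1 l2 where B': "B' = {l1, l2}" "l1 \<noteq> l2" using AB(4) card_2_iff by metis
  obtain x1 y1 where p1: "p1 = [x1, y1]" "x1 \<in> X" using AB(1) A unfolding V0_def by auto
  obtain x2 y2 where p2: "p2 = [x2, y2]" "x2 \<in> X" using AB(1) A unfolding V0_def by auto
  obtain a1 b1 where l1: "l1 = [a1, b1]" "a1 \<in> X" using AB(2) B' unfolding W0_def by auto
  obtain a2 b2 where l2: "l2 = [a2, b2]" "a2 \<in> X" using AB(2) B' unfolding W0_def by auto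
  have e11: "y1 = a1 * x1 + b1" using AB(5) A B' p1 l1 by (auto simp: LE_def)
  have e12: "y1 = a2 * x1 + b2" using AB(5) A B' p1 l2 by (auto simp: LE_def)
  have e21: "y2 = a1 * x2 + b1" using AB(5) A B' p2 l1 by (auto simp: LE_def)
  have e22: "y2 = a2 * x2 + b2" using AB(5) A B' p2 l2 by (auto simp: LE_def)
  have "x1 \<noteq> x2"
  proof
    assume "x1 = x2"
    then have "y1 = y2" using e11 e21 by simp
    then show False using A p1 p2 \<open>x1 = x2\<close> by simp
  qed
  moreover have "a1 * (x1 - x2) = a2 * (x1 - x2)"
  proof -
    have "a1 * x1 - a1 * x2 = y1 - y2" using e11 e21 by (simp add: algebra_simps)
    also have "\<dots> = a2 * x1 - a2 * x2" using e12 e22 by (simp add: algebra_simps)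
    finally show ?thesis by (simp add: algebra_simps)
  qed
  ultimately have "a1 = a2" using g p1 p2 l1 l2 unfolding good_config_def by blast
  moreover then have "b1 = b2" using e11 e12 by simp
  ultimately show False using B' l1 l2 by simp
qed

lemma config_edges:
  assumes g: "good_config X B Y"
  defines "V0 \<equiv> (\<lambda>(x,y). [x,y]) ` (X \<times> Y)" and "W0 \<equiv> (\<lambda>(a,b). [a,b]) ` (X \<times> B)"
  shows "card X * card X * card B \<le> card (LE \<inter> (V0 \<times> W0))"
proof -
  let ?f = "\<lambda>(x,a,b). ([x, a*x+b], [a,b])"
  have fin: "finite X" "finite B" "finite Y" using g unfolding good_config_def by auto
  have sub: "?f ` (X \<times> X \<times> B) \<subseteq> LE \<inter> (V0 \<times> W0)"
    using g unfolding good_config_def V0_def W0_def LE_def by force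
  have inj: "inj_on ?f (X \<times> X \<times> B)" by (auto simp: inj_on_def)
  have "card X * card X * card B = card (X \<times> X \<times> B)" by (simp add: card_cartesian_product)
  also have "\<dots> = card (?f ` (X \<times> X \<times> B))" using inj by (simp add: card_image)
  also have "\<dots> \<le> card (LE \<inter> (V0 \<times> W0))"
    by (rule card_mono[OF _ sub]) (use fin in \<open>auto simp: V0_def W0_def\<close>)
  finally show ?thesis .
qed

lemma no_nlz_from_configs:
  assumes H: "\<And>K::nat. \<exists>X B Y :: 'a::ring_1 set. good_config X B Y \<and> K \<le> card X"
  shows "\<not> ring_near_linear_zarankiewicz TYPE('a)"
proof
  assume "ring_near_linear_zarankiewicz TYPE('a)"
  then have all: "\<forall>n k (V :: 'a list set) W E. definable_bipartite n k V W E \<longrightarrow>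
        near_linear_zarankiewicz V W E" unfolding ring_near_linear_zarankiewicz_def .
  have "near_linear_zarankiewicz (LV::'a list set) LV LE"
    by (rule all[rule_format, OF line_definable])
  then have "\<exists>c::real. c > 0 \<and> (\<forall>V0 W0. finite V0 \<and> finite W0 \<and> V0 \<subseteq> (LV::'a list set) \<and> W0 \<subseteq> LV \<and>
           Kmm_free 2 V0 W0 (LE \<inter> (V0 \<times> W0)) \<longrightarrow>
           real (card (LE \<inter> (V0 \<times> W0))) \<le> c * real (card V0 + card W0) powr (1 + 1/6))"
    unfolding near_linear_zarankiewicz_def apply (erule_tac x=2 in allE, erule_tac x="1/6" in allE)
    apply (erule impE)
     apply simp
    apply assumption
    done
  then obtain c :: real where c: "c > 0" and cb: "\<forall>V0 W0. finite V0 \<and> finite W0 \<and> V0 \<subseteq> (LV::'a list set) \<and> W0 \<subseteq> LV \<and>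
           Kmm_free 2 V0 W0 (LE \<inter> (V0 \<times> W0)) \<longrightarrow>
           real (card (LE \<inter> (V0 \<times> W0))) \<le> c * real (card V0 + card W0) powr (1 + 1/6)"
    by (elim exE conjE) 
  obtain X B Y :: "'a set" where g: "good_config X B Y" and K: "nat \<lceil>256 * c^2\<rceil> + 1 \<le> card X"
    using H by blast
  define V0 where "V0 \<equiv> (\<lambda>(x,y). [x,y]) ` (X \<times> Y)"
  define W0 where "W0 \<equiv> (\<lambda>(a,b). [a,b]) ` (X \<times> B)"
  have fin: "finite X" "finite B" "finite Y" "B \<noteq> {}" and cards: "card Y \<le> 4 * card B" "card B \<le> card Y" "card Y \<le> 4 * card X ^ 2"
    using g unfolding good_config_def by auto
  have "finite V0" "finite W0" using fin unfolding V0_def W0_def by auto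
  moreover have "V0 \<subseteq> LV" "W0 \<subseteq> LV" unfolding V0_def W0_def LV_def by auto
  moreover have "Kmm_free 2 V0 W0 (LE \<inter> (V0 \<times> W0))" using config_kmm_free[OF g] unfolding V0_def W0_def .
  ultimately have up: "real (card (LE \<inter> (V0 \<times> W0))) \<le> c * real (card V0 + card W0) powr (1 + 1/6)"
    using cb by (elim allE impE) (intro conjI; assumption)
  have cV: "card V0 \<le> card X * card Y" unfolding V0_def
    using card_image_le[of "X \<times> Y"] fin by (simp add: card_cartesian_product)
  have cW: "card W0 \<le> card X * card B" unfolding W0_def
    using card_image_le[of "X \<times> B"] fin by (simp add: card_cartesian_product)
  have lo: "card X * card X * card B \<le> card (LE \<inter> (V0 \<times> W0))" using config_edges[OF g] unfolding V0_def W0_def .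
  have cB: "card B > 0" using fin by auto
  have "real (card X) > 256 * c^2" using K by linarith
  show False
  proof (rule real_contra[of "real (card X)" "real (card Y)" "real (card B)" "real (card (LE \<inter> (V0 \<times> W0)))"
        "real (card V0 + card W0)" c])
    show "1 \<le> real (card X)" using K by simp
    show "0 < real (card Y)" using cB cards by simp
    show "real (card X)^2 * real (card B) \<le> real (card (LE \<inter> (V0 \<times> W0)))"
      using lo by (simp add: power2_eq_square flip: of_nat_mult)
    show "real (card Y) \<le> 4 * real (card B)" using cards by simp
    show "0 \<le> real (card V0 + card W0)" by simp
    have "card V0 + card W0 \<le> 2 * card X * card Y"
    proof -
      have "card X * card B \<le> card X * card Y" using cards by simp
      then show ?thesis using cV cW by linarith
    qed
    then have "real (card V0 + card W0) \<le> real (2 * card X * card Y)" by (rule of_nat_mono)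
    then show "real (card V0 + card W0) \<le> 2 * real (card X) * real (card Y)" by simp
    show "real (card Y) \<le> 4 * real (card X)^2" using cards by (simp flip: of_nat_power)
  qed (use \<open>real (card X) > 256 * c^2\<close> c up in auto)
qed


lemma char0_of_int_inj:
  assumes "CHAR('a::ring_1) = 0" and "(of_int m :: 'a) = of_int n" shows "m = n"
proof -
  have "(of_int (m - n) :: 'a) = 0" using assms(2) by simp
  then have "int CHAR('a) dvd (m - n)" using of_int_eq_0_iff_char_dvd[of "m - n", where 'a='a] by blast
  then show ?thesis using assms(1) by simp
qed

lemma char0_of_nat_inj:
  assumes "CHAR('a::ring_1) = 0" shows "inj (of_nat :: nat \<Rightarrow> 'a)"
proof (rule injI)
  fix m n :: nat assume "(of_nat m :: 'a) = of_nat n"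
  then have "(of_int (int m) :: 'a) = of_int (int n)" by simp
  then have "int m = int n" by (rule char0_of_int_inj[OF assms])
  then show "m = n" by simp
qed

lemma char0_configs:
  assumes ch: "CHAR('a::ring_1) = 0"
  shows "\<exists>X B Y :: 'a set. good_config X B Y \<and> K \<le> card X"
proof -
  define n where "n = K + 1"
  have n1: "n \<ge> 1" unfolding n_def by simp
  define X where "X = (of_nat :: nat \<Rightarrow> 'a) ` {..<n}"
  define B where "B = (of_nat :: nat \<Rightarrow> 'a) ` {..<n*n}"
  define Y where "Y = (of_nat :: nat \<Rightarrow> 'a) ` {..<2*n*n}"
  have inj: "inj_on (of_nat :: nat \<Rightarrow> 'a) A" for A using char0_of_nat_inj[OF ch] by (simp add: inj_on_def inj_def)
  have cX: "card X = n" unfolding X_def using inj by (simp add: card_image)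
  have cB: "card B = n*n" unfolding B_def using inj by (simp add: card_image)
  have cY: "card Y = 2*n*n" unfolding Y_def using inj by (simp add: card_image)
  have "good_config X B Y"
    unfolding good_config_def
  proof (intro conjI ballI impI)
    show "finite X" "finite B" "finite Y" unfolding X_def B_def Y_def by auto
    have "0 \<in> {..<n*n}" using n1 by simp
    then show "B \<noteq> {}" unfolding B_def by blast
  next
    fix a x b assume "a \<in> X" "x \<in> X" "b \<in> B"
    then obtain i j k where ijk: "a = of_nat i" "x = of_nat j" "b = of_nat k" "i < n" "j < n" "k < n*n"
      unfolding X_def B_def by auto
    have "i * j \<le> n * n" using ijk by (intro mult_mono) auto
    then have "i * j + k < 2*n*n" using ijk by simp
    moreover have "a * x + b = of_nat (i*j+k)" using ijk by simp
    ultimately show "a * x + b \<in> Y" unfolding Y_def by blast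
  next
    fix a a' x x' assume "a \<in> X" "a' \<in> X" "x \<in> X" "x' \<in> X" and ne: "x \<noteq> x'" and eq: "a * (x - x') = a' * (x - x')"
    then obtain i i' j j' where ij: "a = of_nat i" "a' = of_nat i'" "x = of_nat j" "x' = of_nat j'"
      unfolding X_def by auto
    have "(of_int (int i * (int j - int j')) :: 'a) = of_int (int i' * (int j - int j'))"
      using eq ij by simp
    then have "int i * (int j - int j') = int i' * (int j - int j')" by (rule char0_of_int_inj[OF ch])
    moreover have "int j - int j' \<noteq> 0" using ne ij by auto
    ultimately have "i = i'" by simp
    then show "a = a'" using ij by simp
  next
    show "card Y \<le> 4 * card B" "card B \<le> card Y" "card Y \<le> 4 * card X ^ 2"
      using cX cB cY by (auto simp: power2_eq_square)
  qed
  moreover have "K \<le> card X" using cX n_def by simp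
  ultimately show ?thesis by blast
qed


lemma of_nat_mod_CHAR: "(of_nat (k mod CHAR('a)) :: 'a::ring_1) = of_nat k"
proof -
  have "(of_nat k :: 'a) = of_nat (k div CHAR('a) * CHAR('a) + k mod CHAR('a))" by simp
  also have "\<dots> = of_nat (k div CHAR('a)) * of_nat CHAR('a) + of_nat (k mod CHAR('a))"
    by (simp only: of_nat_add of_nat_mult)
  also have "\<dots> = of_nat (k mod CHAR('a))" by simp
  finally show ?thesis by simp
qed

lemma binom_one_plus:
  fixes y :: "'a::ring_1"
  shows "(1 + y)^n = (\<Sum>k\<le>n. of_nat (n choose k) * y^k)"
proof (induction n)
  case 0
  then show ?case by simp
next
  case (Suc n)
  have A: "y * (\<Sum>k\<le>n. of_nat (n choose k) * y^k) = (\<Sum>k\<le>n. of_nat (n choose k) * y^(Suc k))"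
    by (simp add: sum_distrib_left mult_of_nat_commute mult.assoc)
  have B: "(\<Sum>k\<le>n. of_nat (n choose k) * y^k) = 1 + (\<Sum>k\<le>n. of_nat (n choose Suc k) * y^(Suc k))"
  proof (cases n)
    case 0 then show ?thesis by simp
  next
    case (Suc n')
    have "(\<Sum>k\<le>n. of_nat (n choose k) * y^k) = 1 + (\<Sum>k\<le>n'. of_nat (n choose Suc k) * y^(Suc k))"
      unfolding Suc by (subst sum.atMost_Suc_shift) simp
    also have "(\<Sum>k\<le>n'. of_nat (n choose Suc k) * y^(Suc k)) = (\<Sum>k\<le>n. of_nat (n choose Suc k) * y^(Suc k))"
      unfolding Suc by (simp add: sum.atMost_Suc binomial_eq_0 del: binomial_Suc_Suc)
    finally show ?thesis .
  qed
  have "(1 + y)^Suc n = (1 + y) * (1 + y)^n" by simp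
  also have "\<dots> = (\<Sum>k\<le>n. of_nat (n choose k) * y^k) + y * (\<Sum>k\<le>n. of_nat (n choose k) * y^k)"
    unfolding Suc.IH by (simp add: distrib_right)
  also have "\<dots> = 1 + (\<Sum>k\<le>n. of_nat (n choose Suc k) * y^(Suc k)) + (\<Sum>k\<le>n. of_nat (n choose k) * y^(Suc k))"
    by (subst A, subst B) (rule refl)
  also have "\<dots> = 1 + (\<Sum>k\<le>n. of_nat (Suc n choose Suc k) * y^(Suc k))"
    by (simp add: sum.distrib distrib_right add.assoc)
  also have "\<dots> = (\<Sum>k\<le>Suc n. of_nat (Suc n choose k) * y^k)"
    by (simp only: sum.atMost_Suc_shift) (simp del: binomial_Suc_Suc)
  finally show ?case .
qed

locale rdom =
  fixes ty :: "'a::ring_1 itself"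
  assumes nzd: "\<And>a b::'a. a * b = 0 \<Longrightarrow> a = 0 \<or> b = 0"
begin

lemma mult_eq_0: "(a::'a) * b = 0 \<longleftrightarrow> a = 0 \<or> b = 0"
  using nzd by auto

lemma power_eq_0: "(a::'a)^n = 0 \<longleftrightarrow> a = 0 \<and> n > 0"
  by (induction n) (auto simp: mult_eq_0)

lemma cancel_left: "(a::'a) \<noteq> 0 \<Longrightarrow> a * x = a * y \<Longrightarrow> x = y"
proof -
  assume "a \<noteq> 0" "a * x = a * y"
  then have "a * (x - y) = 0" by (simp add: right_diff_distrib)
  then show "x = y" using \<open>a \<noteq> 0\<close> mult_eq_0 by simp
qed

lemma cancel_right: "(a::'a) \<noteq> 0 \<Longrightarrow> x * a = y * a \<Longrightarrow> x = y"
proof -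
  assume "a \<noteq> 0" "x * a = y * a"
  then have "(x - y) * a = 0" by (simp add: left_diff_distrib)
  then show "x = y" using \<open>a \<noteq> 0\<close> mult_eq_0 by simp
qed

lemma CHAR_prime:
  assumes "CHAR('a) \<noteq> 0" shows "prime CHAR('a)"
proof -
  let ?p = "CHAR('a)"
  have p1: "?p \<noteq> 1" by simp
  have "?p > 1" using assms p1 by linarith
  moreover have "m = 1 \<or> m = ?p" if "m dvd ?p" for m
  proof -
    obtain k where k: "?p = m * k" using \<open>m dvd ?p\<close> by blast
    have "(of_nat m :: 'a) * of_nat k = 0" using k by (metis of_nat_CHAR of_nat_mult)
    then have "(of_nat m :: 'a) = 0 \<or> (of_nat k :: 'a) = 0" by (rule nzd)
    then have "?p dvd m \<or> ?p dvd k" by (simp add: of_nat_eq_0_iff_char_dvd)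
    moreover have "m \<noteq> 0" "k \<noteq> 0" using k assms by auto
    moreover have "k dvd ?p" using k by simp
    then have "m \<le> ?p" "k \<le> ?p" using dvd_imp_le[of m ?p] dvd_imp_le[of k ?p] \<open>m dvd ?p\<close> assms
      by auto
    ultimately have "m = ?p \<or> k = ?p" using dvd_imp_le[of ?p m] dvd_imp_le[of ?p k] by fastforce
    moreover have "m = 1" if "k = ?p"
    proof -
      have "1 * k = m * k" using k that by simp
      then show "m = 1" using \<open>k \<noteq> 0\<close> by (metis mult_cancel2)
    qed
    ultimately show "m = 1 \<or> m = ?p" by blast
  qed
  ultimately show ?thesis by (simp add: prime_nat_iff)
qed

lemma frob_one_plus:
  assumes "CHAR('a) \<noteq> 0"
  shows "(1 + (y::'a))^CHAR('a) = 1 + y^CHAR('a)"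
proof -
  let ?p = "CHAR('a)"
  have pr: "prime ?p" using CHAR_prime assms .
  have "(1 + y)^?p = (\<Sum>k\<le>?p. of_nat (?p choose k) * y^k)" by (rule binom_one_plus)
  also have "\<dots> = (\<Sum>k\<in>{0, ?p}. of_nat (?p choose k) * y^k)"
  proof (rule sum.mono_neutral_right)
    show "\<forall>i\<in>{..?p} - {0, ?p}. of_nat (?p choose i) * y ^ i = 0"
    proof
      fix i assume "i \<in> {..?p} - {0, ?p}"
      then have "i < ?p" "i \<noteq> 0" by auto
      then have "?p dvd (?p choose i)" using dvd_choose_prime pr assms by blast
      then have "(of_nat (?p choose i) :: 'a) = 0" by (simp add: of_nat_eq_0_iff_char_dvd)
      then show "of_nat (?p choose i) * y ^ i = 0" by simp
    qed
  qed auto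
  also have "\<dots> = 1 + y^?p" using assms by simp
  finally show ?thesis .
qed

end


lemma sum_lessThan_add_split:
  "sum f {..<m + n} = sum f {..<m} + sum (\<lambda>i. f (m + i)) {..<(n::nat)}"
  by (induction n) (simp_all add: add.assoc)

lemma of_nat_comm_left: "(t::'a::ring_1) * (of_nat k * s) = of_nat k * (t * s)"
proof -
  have "t * (of_nat k * s) = (t * of_nat k) * s" by (simp only: mult.assoc)
  also have "t * of_nat k = of_nat k * t" by (rule mult_of_nat_commute[symmetric])
  also have "(of_nat k * t) * s = of_nat k * (t*s)" by (simp only: mult.assoc)
  finally show ?thesis .
qed

definition Qs :: "'a::ring_1 \<Rightarrow> nat \<Rightarrow> 'a set" where
  "Qs t d = {\<Sum>i<d. of_nat (c i) * t^i | c. True}"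

lemma Qs_I: "(\<Sum>i<d. of_nat (c i) * t^i) \<in> Qs t d"
  unfolding Qs_def by blast

lemma Qs_E: "x \<in> Qs t d \<Longrightarrow> (\<And>c. x = (\<Sum>i<d. of_nat (c i) * t^i) \<Longrightarrow> P) \<Longrightarrow> P"
  unfolding Qs_def by blast

lemma Qs_zero: "0 \<in> Qs t d"
  using Qs_I[where c="\<lambda>_. 0" and d=d and t=t] by simp

lemma Qs_add: "x \<in> Qs t d \<Longrightarrow> y \<in> Qs t d \<Longrightarrow> x + y \<in> Qs t d"
proof -
  assume "x \<in> Qs t d" "y \<in> Qs t d"
  then obtain c c' where "x = (\<Sum>i<d. of_nat (c i) * t^i)" "y = (\<Sum>i<d. of_nat (c' i) * t^i)"
    by (metis Qs_E)
  then have "x + y = (\<Sum>i<d. of_nat (c i + c' i) * t^i)"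
    by (simp add: sum.distrib distrib_right)
  then show ?thesis using Qs_I by metis
qed

lemma Qs_sum: "finite I \<Longrightarrow> (\<And>i. i \<in> I \<Longrightarrow> f i \<in> Qs t d) \<Longrightarrow> sum f I \<in> Qs t d"
  by (induction I rule: finite_induct) (auto intro: Qs_add Qs_zero)

lemma Qs_nat_mult: "x \<in> Qs t d \<Longrightarrow> of_nat k * x \<in> Qs t d"
proof -
  assume "x \<in> Qs t d"
  then obtain c where "x = (\<Sum>i<d. of_nat (c i) * t^i)" by (metis Qs_E)
  then have "of_nat k * x = (\<Sum>i<d. of_nat (k * c i) * t^i)"
    by (simp add: sum_distrib_left mult.assoc)
  then show ?thesis using Qs_I by metis
qed

lemma Qs_mono: "d \<le> e \<Longrightarrow> Qs t d \<subseteq> Qs t e"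
proof
  fix x assume "d \<le> e" "x \<in> Qs t d"
  then obtain c where x: "x = (\<Sum>i<d. of_nat (c i) * t^i)" by (metis Qs_E)
  have "(\<Sum>i<e. of_nat (if i < d then c i else 0) * t^i) = (\<Sum>i<d. of_nat (if i < d then c i else 0) * t^i)"
    by (rule sum.mono_neutral_right) (use \<open>d \<le> e\<close> in auto)
  also have "\<dots> = x" unfolding x by (rule sum.cong) auto
  finally show "x \<in> Qs t e" using Qs_I by metis
qed

lemma Qs_pow: "i < d \<Longrightarrow> t^i \<in> Qs t d"
proof -
  assume "i < d"
  have "(\<Sum>j<d. of_nat (if j = i then 1 else 0) * t^j) = (\<Sum>j<d. if j = i then t^j else 0)"
    by (rule sum.cong) auto
  also have "\<dots> = t^i" using \<open>i < d\<close> by simp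
  finally show ?thesis using Qs_I by metis
qed

lemma Qs_shift: "x \<in> Qs t d \<Longrightarrow> t * x \<in> Qs t (Suc d)"
proof -
  assume "x \<in> Qs t d"
  then obtain c where x: "x = (\<Sum>i<d. of_nat (c i) * t^i)" by (metis Qs_E)
  have "t * x = (\<Sum>i<d. of_nat (c i) * t^(Suc i))"
    unfolding x sum_distrib_left by (rule sum.cong) (simp_all add: of_nat_comm_left)
  also have "\<dots> = (\<Sum>i<Suc d. of_nat (if i = 0 then 0 else c (i - 1)) * t^i)"
    by (subst sum.lessThan_Suc_shift) simp
  finally show ?thesis using Qs_I by metis
qed

lemma Qs_pow_mult: "x \<in> Qs t d \<Longrightarrow> t^i * x \<in> Qs t (d + i)"
proof (induction i)
  case 0 then show ?case by simp
next
  case (Suc i)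
  have "t^Suc i * x = t * (t^i * x)" by (simp add: mult.assoc)
  then show ?case using Qs_shift[OF Suc.IH[OF Suc.prems]] by simp
qed

lemma Qs_mult: "x \<in> Qs t d \<Longrightarrow> y \<in> Qs t d \<Longrightarrow> x * y \<in> Qs t (2*d)"
proof -
  assume x: "x \<in> Qs t d" and y: "y \<in> Qs t d"
  then obtain c where x: "x = (\<Sum>i<d. of_nat (c i) * t^i)" by (metis Qs_E)
  have "x * y = (\<Sum>i<d. of_nat (c i) * (t^i * y))"
    unfolding x by (simp add: sum_distrib_right mult.assoc)
  also have "\<dots> \<in> Qs t (2*d)"
  proof (rule Qs_sum)
    fix i assume "i \<in> {..<d}"
    then have "Qs t (d + i) \<subseteq> Qs t (2*d)" by (intro Qs_mono) auto
    then show "of_nat (c i) * (t^i * y) \<in> Qs t (2*d)"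
      using Qs_pow_mult[OF y, of i] by (intro Qs_nat_mult) auto
  qed simp
  finally show ?thesis .
qed

lemma Qs_finite:
  assumes "CHAR('a::ring_1) \<noteq> 0"
  shows "finite (Qs (t::'a) d)"
proof -
  let ?p = "CHAR('a)"
  let ?f = "\<lambda>xs. (\<Sum>i<d. of_nat (xs!i) * t^i)"
  have "Qs t d \<subseteq> ?f ` {xs. set xs \<subseteq> {..<?p} \<and> length xs = d}"
  proof
    fix x assume "x \<in> Qs t d"
    then obtain c where x: "x = (\<Sum>i<d. of_nat (c i) * t^i)" by (metis Qs_E)
    define xs where "xs = map (\<lambda>i. c i mod ?p) [0..<d]"
    have "set xs \<subseteq> {..<?p}" unfolding xs_def using assms by auto
    moreover have "length xs = d" unfolding xs_def by simp
    moreover have "?f xs = x" unfolding x xs_def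
      by (rule sum.cong) (simp_all add: of_nat_mod_CHAR)
    ultimately show "x \<in> ?f ` {xs. set xs \<subseteq> {..<?p} \<and> length xs = d}" by blast
  qed
  moreover have "finite {xs. set xs \<subseteq> {..<?p} \<and> length xs = d}"
    by (rule finite_lists_length_eq) simp
  ultimately show ?thesis by (meson finite_imageI finite_subset)
qed

lemma Qs_split: "Qs t (2*d) \<subseteq> (\<lambda>(x,y). x + t^d * y) ` (Qs t d \<times> Qs t d)"
proof
  fix z assume "z \<in> Qs t (2*d)"
  then obtain c where z: "z = (\<Sum>i<2*d. of_nat (c i) * t^i)" by (metis Qs_E)
  have "z = (\<Sum>i<d. of_nat (c i) * t^i) + (\<Sum>i<d. of_nat (c (d+i)) * t^(d+i))"
    unfolding z using sum_lessThan_add_split[of _ d d] by (simp add: mult_2)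
  also have "(\<Sum>i<d. of_nat (c (d+i)) * t^(d+i)) = t^d * (\<Sum>i<d. of_nat (c (d+i)) * t^i)"
    unfolding sum_distrib_left by (rule sum.cong) (simp_all add: of_nat_comm_left power_add)
  finally have "z = (\<lambda>(x,y). x + t^d * y) ((\<Sum>i<d. of_nat (c i) * t^i), (\<Sum>i<d. of_nat (c (d+i)) * t^i))"
    by simp
  moreover have "((\<Sum>i<d. of_nat (c i) * t^i), (\<Sum>i<d. of_nat (c (d+i)) * t^i)) \<in> Qs t d \<times> Qs t d"
    using Qs_I[where c=c] Qs_I[where c="\<lambda>i. c (d+i)"] by blast
  ultimately show "z \<in> (\<lambda>(x,y). x + t^d * y) ` (Qs t d \<times> Qs t d)" by (rule image_eqI)
qed

lemma Qs_card_split: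
  assumes "CHAR('a::ring_1) \<noteq> 0"
  shows "card (Qs (t::'a) (2*d)) \<le> card (Qs t d)^2"
proof -
  have "card (Qs t (2*d)) \<le> card ((\<lambda>(x,y). x + t^d * y) ` (Qs t d \<times> Qs t d))"
    by (rule card_mono[OF _ Qs_split]) (use Qs_finite[OF assms] in auto)
  also have "\<dots> \<le> card (Qs t d \<times> Qs t d)" by (rule card_image_le) (use Qs_finite[OF assms] in auto)
  also have "\<dots> = card (Qs t d)^2" by (simp add: card_cartesian_product power2_eq_square)
  finally show ?thesis .
qed

context rdom
begin

lemma K22_dom: "a * (x - x') = a' * (x - x') \<Longrightarrow> x \<noteq> x' \<Longrightarrow> a = (a'::'a)"
proof -
  assume "a * (x - x') = a' * (x - x')" "x \<noteq> x'"
  then have "(a - a') * (x - x') = 0" by (simp add: left_diff_distrib)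
  then show "a = a'" using \<open>x \<noteq> x'\<close> mult_eq_0 by simp
qed

lemma nontorsion_configs:
  assumes ch: "CHAR('a) \<noteq> 0" and t0: "(t::'a) \<noteq> 0" and nt: "\<And>n. n > 0 \<Longrightarrow> t^n \<noteq> 1"
  shows "\<exists>X B Y :: 'a set. good_config X B Y \<and> K \<le> card X"
proof -
  have inj: "inj_on (\<lambda>i. t^i) UNIV"
  proof (rule inj_onI)
    fix i j assume eq: "t^i = t^j"
    show "i = j"
    proof (rule ccontr)
      assume "i \<noteq> j"
      then consider "i < j" | "j < i" by linarith
      then show False
      proof cases
        case 1
        have "t^i * t^(j-i) = t^j" using 1 by (simp flip: power_add)
        then have "t^i * t^(j-i) = t^i * 1" using eq by simp
        then have "t^(j-i) = 1" using cancel_left t0 power_eq_0 by blast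
        then show False using nt 1 by simp
      next
        case 2
        have "t^j * t^(i-j) = t^i" using 2 by (simp flip: power_add)
        then have "t^j * t^(i-j) = t^j * 1" using eq by simp
        then have "t^(i-j) = 1" using cancel_left t0 power_eq_0 by blast
        then show False using nt 2 by simp
      qed
    qed
  qed
  let ?X = "Qs t K" and ?Y = "Qs t (2*K)"
  have fin: "finite ?X" "finite ?Y" using Qs_finite[OF ch] by auto
  have "(\<lambda>i. t^i) ` {..<K} \<subseteq> ?X" using Qs_pow by blast
  then have "card ((\<lambda>i. t^i) ` {..<K}) \<le> card ?X" using fin by (intro card_mono) auto
  moreover have "card ((\<lambda>i. t^i) ` {..<K}) = K"
    using inj by (simp add: card_image inj_on_subset[OF inj])
  ultimately have cK: "K \<le> card ?X" by simp
  have "good_config ?X ?Y ?Y"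
    unfolding good_config_def
  proof (intro conjI ballI impI)
    show "finite ?X" "finite ?Y" "finite ?Y" using fin by simp_all
    show "?Y \<noteq> {}" using Qs_zero by blast
    show "card ?Y \<le> 4 * card ?Y" "card ?Y \<le> card ?Y" by simp_all
    show "card ?Y \<le> 4 * card ?X ^ 2" using Qs_card_split[OF ch, of t K] by simp
  next
    fix a x b assume "a \<in> ?X" "x \<in> ?X" "b \<in> ?Y"
    then show "a * x + b \<in> ?Y" by (intro Qs_add Qs_mult)
  next
    fix a a' x x' assume "a \<in> ?X" "a' \<in> ?X" "x \<in> ?X" "x' \<in> ?X" "x \<noteq> x'" "a * (x - x') = a' * (x - x')"
    then show "a = a'" using K22_dom[of a x x' a'] by simp
  qed
  then show ?thesis using cK by blast
qed

end


definition subr :: "'a::ring_1 set \<Rightarrow> bool" where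
  "subr E \<longleftrightarrow> 1 \<in> E \<and> (\<forall>x\<in>E. \<forall>y\<in>E. x + y \<in> E \<and> x * y \<in> E) \<and> (\<forall>x\<in>E. -x \<in> E)"

lemma subr_one: "subr E \<Longrightarrow> 1 \<in> E" unfolding subr_def by blast
lemma subr_add: "subr E \<Longrightarrow> x \<in> E \<Longrightarrow> y \<in> E \<Longrightarrow> x + y \<in> E" unfolding subr_def by blast
lemma subr_mult: "subr E \<Longrightarrow> x \<in> E \<Longrightarrow> y \<in> E \<Longrightarrow> x * y \<in> E" unfolding subr_def by blast
lemma subr_uminus: "subr E \<Longrightarrow> x \<in> E \<Longrightarrow> -x \<in> E" unfolding subr_def by blast
lemma subr_zero: "subr E \<Longrightarrow> 0 \<in> E"
  using subr_add[of E 1 "-1"] subr_one subr_uminus by fastforce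
lemma subr_diff: "subr E \<Longrightarrow> x \<in> E \<Longrightarrow> y \<in> E \<Longrightarrow> x - y \<in> E"
  using subr_add subr_uminus by (metis diff_conv_add_uminus)
lemma subr_power: "subr E \<Longrightarrow> x \<in> E \<Longrightarrow> x^n \<in> E"
  by (induction n) (auto intro: subr_mult subr_one)
lemma subr_sum:
  assumes "subr E" "finite I" "\<And>i. i \<in> I \<Longrightarrow> f i \<in> E" shows "sum f I \<in> E"
  using assms(2,3)
proof (induction I rule: finite_induct)
  case empty then show ?case using subr_zero[OF assms(1)] by simp
next
  case (insert x F) then show ?case by (simp add: subr_add[OF assms(1)])
qed
lemma subr_of_nat: "subr E \<Longrightarrow> of_nat n \<in> E"
  by (induction n) (auto intro: subr_add subr_one subr_zero)

lemma subr_UNIV: "subr UNIV" unfolding subr_def by simp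

definition prime_ring :: "'a::ring_1 set" where "prime_ring = range of_nat"

lemma subr_prime_ring: "CHAR('a::ring_1) \<noteq> 0 \<Longrightarrow> subr (prime_ring :: 'a set)"
  unfolding subr_def prime_ring_def
proof (intro conjI ballI)
  have "(1::'a) = of_nat 1" by simp
  then show "(1::'a) \<in> range of_nat" by blast
next
  fix x y :: 'a assume "x \<in> range of_nat" "y \<in> range of_nat"
  then obtain i j where "x = of_nat i" "y = of_nat j" by blast
  then have "x + y = of_nat (i + j)" "x * y = of_nat (i * j)" by simp_all
  then show "x + y \<in> range of_nat" "x * y \<in> range of_nat" by (simp_all only: rangeI)
next
  assume ch: "CHAR('a) \<noteq> 0"
  fix x :: 'a assume "x \<in> range of_nat"
  then obtain i where x: "x = of_nat i" by blast
  have "of_nat ((CHAR('a) - 1) * i) + x = of_nat ((CHAR('a) - 1) * i + i)" unfolding x by simp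
  also have "(CHAR('a) - 1) * i + i = CHAR('a) * i" using ch
    by (cases "CHAR('a)") simp_all
  also have "(of_nat (CHAR('a) * i) :: 'a) = 0" by simp
  finally have h: "of_nat ((CHAR('a) - 1) * i) + x = 0" .
  have "-x = of_nat ((CHAR('a) - 1) * i)" unfolding neg_eq_iff_add_eq_0 using h by (simp only: add.commute)
  then show "-x \<in> range of_nat" by (simp only: rangeI)
qed

lemma finite_prime_ring: "CHAR('a::ring_1) \<noteq> 0 \<Longrightarrow> finite (prime_ring :: 'a set)"
proof -
  assume ch: "CHAR('a) \<noteq> 0"
  have "(prime_ring :: 'a set) \<subseteq> of_nat ` {..<CHAR('a)}"
  proof
    fix x :: 'a assume "x \<in> prime_ring"
    then obtain i where x: "x = of_nat i" unfolding prime_ring_def by blast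
    then have "x = of_nat (i mod CHAR('a))" by (simp add: of_nat_mod_CHAR)
    moreover have "i mod CHAR('a) < CHAR('a)" using ch by simp
    ultimately show "x \<in> of_nat ` {..<CHAR('a)}" by blast
  qed
  then show ?thesis using finite_subset by blast
qed

lemma prime_ring_sub: "subr E \<Longrightarrow> prime_ring \<subseteq> E"
  unfolding prime_ring_def using subr_of_nat by blast

definition commset :: "'a::ring_1 set \<Rightarrow> bool" where
  "commset E \<longleftrightarrow> (\<forall>x\<in>E. \<forall>y\<in>E. x * y = y * x)"

locale rtor = rdom ty for ty :: "'a::ring_1 itself" +
  assumes ch: "CHAR('a) \<noteq> 0"
    and tor: "\<And>x::'a. x \<noteq> 0 \<Longrightarrow> \<exists>n>0. x^n = 1"
begin

lemma inv_in:
  assumes "subr E" "x \<in> E" "(x::'a) \<noteq> 0"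
  shows "\<exists>y\<in>E. x * y = 1 \<and> y * x = 1"
proof -
  obtain n where n: "n > 0" "x^n = 1" using tor assms(3) by blast
  have "x * x^(n-1) = 1" "x^(n-1) * x = 1" using n by (simp_all add: power_Suc2[symmetric] flip: power_Suc)
  moreover have "x^(n-1) \<in> E" using assms subr_power by blast
  ultimately show ?thesis by blast
qed

lemma ext_ring:
  assumes E: "subr E" "commset E" and R0: "subr R0" "finite R0" "R0 \<subseteq> E" and t: "(t::'a) \<in> E"
  shows "\<exists>R1. subr R1 \<and> finite R1 \<and> R0 \<subseteq> R1 \<and> t \<in> R1 \<and> R1 \<subseteq> E"
proof (cases "t = 0")
  case True
  then show ?thesis using R0 subr_zero by blast
next
  case False
  then obtain n where n: "n > 0" "t^n = 1" using tor by blast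
  define R1 where "R1 = {\<Sum>i<n. r i * t^i | r. \<forall>i<n. r i \<in> R0}"
  have R1I: "(\<Sum>i<n. r i * t^i) \<in> R1" if "\<forall>i<n. r i \<in> R0" for r
    unfolding R1_def using that by blast
  have R1E: "\<exists>r. (\<forall>i<n. r i \<in> R0) \<and> y = (\<Sum>i<n. r i * t^i)" if "y \<in> R1" for y
    using that unfolding R1_def by blast
  have tcomm: "t * r = r * t" if "r \<in> R0" for r
    using E(2) t R0(3) that unfolding commset_def by blast
  have tpcomm: "t^k * r = r * t^k" if "r \<in> R0" for r k
  proof (induction k)
    case 0 then show ?case by simp
  next
    case (Suc k)
    have "t^Suc k * r = t^k * (t * r)" by (simp only: power_Suc2 mult.assoc)
    also have "\<dots> = (t^k * r) * t" using tcomm[OF that] by (simp add: mult.assoc)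
    also have "\<dots> = r * t^Suc k" by (simp only: Suc.IH mult.assoc power_Suc2)
    finally show ?case .
  qed
  have single: "x * t^j \<in> R1" if "x \<in> R0" "j < n" for x j
  proof -
    have "(\<Sum>i<n. (if i = j then x else 0) * t^i) = (\<Sum>i<n. if i = j then x * t^i else 0)"
      by (rule sum.cong) auto
    also have "\<dots> = x * t^j" using that by simp
    finally show ?thesis using R1I[of "\<lambda>i. if i = j then x else 0"] that subr_zero[OF R0(1)] by auto
  qed
  have R0R1: "R0 \<subseteq> R1" using single n by force
  have tR1: "t \<in> R1"
  proof -
    have "t = 1 * t^(1 mod n)"
    proof (cases "n = 1")
      case True then show ?thesis using n by simp
    next
      case False then show ?thesis using n by simp
    qed
    then show ?thesis using single[of 1 "1 mod n"] subr_one[OF R0(1)] n by simp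
  qed
  have addR1: "x + y \<in> R1" if hx: "x \<in> R1" "y \<in> R1" for x y
  proof -
    obtain r where r: "\<forall>i<n. r i \<in> R0" "x = (\<Sum>i<n. r i * t^i)" using R1E hx(1) by blast
    obtain r' where r': "\<forall>i<n. r' i \<in> R0" "y = (\<Sum>i<n. r' i * t^i)" using R1E hx(2) by blast
    have "x + y = (\<Sum>i<n. (r i + r' i) * t^i)" using r r' by (simp add: sum.distrib distrib_right)
    then show ?thesis using R1I[of "\<lambda>i. r i + r' i"] r r' subr_add[OF R0(1)] by simp
  qed
  have negR1: "-x \<in> R1" if hx: "x \<in> R1" for x
  proof -
    obtain r where r: "\<forall>i<n. r i \<in> R0" "x = (\<Sum>i<n. r i * t^i)" using R1E hx by blast
    have "-x = (\<Sum>i<n. (- r i) * t^i)" using r by (simp add: sum_negf)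
    then show ?thesis using R1I[of "\<lambda>i. - r i"] r subr_uminus[OF R0(1)] by simp
  qed
  have sumR1: "sum f I \<in> R1" if "finite I" "\<And>i. i \<in> I \<Longrightarrow> f i \<in> R1" for f and I :: "nat set"
    using that
  proof (induction I rule: finite_induct)
    case empty then show ?case using R0R1 subr_zero[OF R0(1)] by auto
  next
    case (insert x F) then show ?case using addR1 by simp
  qed
  have lmulR0: "x * y \<in> R1" if hx: "x \<in> R0" "y \<in> R1" for x y
  proof -
    obtain r where r: "\<forall>i<n. r i \<in> R0" "y = (\<Sum>i<n. r i * t^i)" using R1E hx(2) by blast
    have "x * y = (\<Sum>i<n. (x * r i) * t^i)" using r by (simp add: sum_distrib_left mult.assoc)
    then show ?thesis using R1I[of "\<lambda>i. x * r i"] r subr_mult[OF R0(1)] hx(1) by simp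
  qed
  have tmulR1: "t * y \<in> R1" if hy: "y \<in> R1" for y
  proof -
    obtain r where r: "\<forall>i<n. r i \<in> R0" "y = (\<Sum>i<n. r i * t^i)" using R1E hy by blast
    obtain n' where n': "n = Suc n'" using n(1) by (cases n) auto
    have "t * y = (\<Sum>i<n. r i * t^Suc i)"
      unfolding r(2) sum_distrib_left
    proof (rule sum.cong)
      fix i assume "i \<in> {..<n}"
      then have "r i \<in> R0" using r by auto
      then show "t * (r i * t ^ i) = r i * t ^ Suc i" using tcomm by (simp add: mult.assoc[symmetric])
    qed simp
    also have "\<dots> = (\<Sum>i<n'. r i * t^Suc i) + r n'"
      using n n' by simp
    also have "\<dots> = (\<Sum>i<n. (if i = 0 then r n' else r (i - 1)) * t^i)"
      unfolding n' by (subst sum.lessThan_Suc_shift) (simp add: add.commute)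
    finally show ?thesis using R1I[of "\<lambda>i. if i = 0 then r n' else r (i - 1)"] r n' by auto
  qed
  have tpmulR1: "t^k * y \<in> R1" if "y \<in> R1" for y k
    using that by (induction k) (simp_all add: tmulR1 mult.assoc)
  have mulR1: "x * y \<in> R1" if hx: "x \<in> R1" "y \<in> R1" for x y
  proof -
    obtain r where r: "\<forall>i<n. r i \<in> R0" "x = (\<Sum>i<n. r i * t^i)" using R1E hx(1) by blast
    have "x * y = (\<Sum>i<n. r i * (t^i * y))" using r by (simp add: sum_distrib_right mult.assoc)
    also have "\<dots> \<in> R1" using r hx(2) by (intro sumR1) (auto intro: lmulR0 tpmulR1)
    finally show ?thesis .
  qed
  have "subr R1" unfolding subr_def using R0R1 subr_one[OF R0(1)] addR1 mulR1 negR1 by blast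
  moreover have "finite R1"
  proof -
    let ?f = "\<lambda>xs. (\<Sum>i<n. xs!i * t^i)"
    have "R1 \<subseteq> ?f ` {xs. set xs \<subseteq> R0 \<and> length xs = n}"
    proof
      fix y assume "y \<in> R1"
      then obtain r where r: "\<forall>i<n. r i \<in> R0" "y = (\<Sum>i<n. r i * t^i)" using R1E by blast
      define xs where "xs = map r [0..<n]"
      have "set xs \<subseteq> R0" "length xs = n" unfolding xs_def using r by auto
      moreover have "?f xs = y" unfolding r(2) xs_def by (rule sum.cong) auto
      ultimately show "y \<in> ?f ` {xs. set xs \<subseteq> R0 \<and> length xs = n}" by blast
    qed
    moreover have "finite {xs. set xs \<subseteq> R0 \<and> length xs = n}"
      by (rule finite_lists_length_eq) (rule R0(2))
    ultimately show ?thesis by (meson finite_imageI finite_subset)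
  qed
  moreover have "R1 \<subseteq> E"
  proof
    fix y assume "y \<in> R1"
    then obtain r where r: "\<forall>i<n. r i \<in> R0" "y = (\<Sum>i<n. r i * t^i)" using R1E by blast
    show "y \<in> E" unfolding r(2)
      using r(1) R0(3) by (intro subr_sum[OF E(1)]) (auto intro: subr_mult[OF E(1)] subr_power[OF E(1) t])
  qed
  ultimately show ?thesis using R0R1 tR1 by blast
qed

end


lemma geo_sum: "(1 - (b::'a::ring_1)) * (\<Sum>i<n. b^i) = 1 - b^n"
proof (induction n)
  case 0 then show ?case by simp
next
  case (Suc n)
  have "(1 - b) * (\<Sum>i<Suc n. b^i) = (1 - b) * (\<Sum>i<n. b^i) + (1 - b) * b^n"
    by (simp add: distrib_left)
  also have "\<dots> = 1 - b^n + (b^n - b^Suc n)" unfolding Suc.IH by (simp add: left_diff_distrib)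
  also have "\<dots> = 1 - b^Suc n" by simp
  finally show ?case .
qed

lemma sum_mod_shift:
  assumes "(m::nat) > 0"
  shows "(\<Sum>j<m. h ((j+1) mod m)) = (\<Sum>j<m. (h j :: 'a::comm_monoid_add))"
proof -
  obtain n where n: "m = Suc n" using assms by (cases m) auto
  have "(\<Sum>j<Suc n. h ((j+1) mod Suc n)) = (\<Sum>j<n. h ((j+1) mod Suc n)) + h 0"
    by simp
  also have "(\<Sum>j<n. h ((j+1) mod Suc n)) = (\<Sum>j<n. h (Suc j))"
    by (rule sum.cong) auto
  also have "(\<Sum>j<n. h (Suc j)) + h 0 = (\<Sum>j<Suc n. h j)"
    by (subst sum.lessThan_Suc_shift) (simp add: add.commute)
  finally show ?thesis unfolding n .
qed

lemma power_mod_exp: "(a::'a::monoid_mult)^m = 1 \<Longrightarrow> a^k = a^(k mod m)"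
proof -
  assume "a^m = 1"
  have "a^k = a^(m * (k div m) + k mod m)" by simp
  also have "\<dots> = (a^m)^(k div m) * a^(k mod m)" by (simp only: power_add power_mult)
  finally show ?thesis using \<open>a^m = 1\<close> by simp
qed

context rtor
begin

lemma comm_fin_sub:
  assumes E: "subr (E::'a set)" "commset E" and S: "finite S" "S \<subseteq> E"
  shows "\<exists>R. subr R \<and> finite R \<and> S \<subseteq> R \<and> R \<subseteq> E"
  using S
proof (induction S rule: finite_induct)
  case empty
  show ?case
    by (rule exI[of _ prime_ring]) (use subr_prime_ring[OF ch] finite_prime_ring[OF ch] prime_ring_sub[OF E(1)] in auto)
next
  case (insert t S)
  then obtain R where R: "subr R" "finite R" "S \<subseteq> R" "R \<subseteq> E" by auto
  have "t \<in> E" using insert.prems by simp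
  then obtain R1 where "subr R1" "finite R1" "R \<subseteq> R1" "t \<in> R1" "R1 \<subseteq> E"
    using ext_ring[OF E R(1,2,4)] by blast
  then show ?case using R(3) by blast
qed

lemma comm_bounded:
  assumes bnd: "\<And>R::'a set. subr R \<Longrightarrow> finite R \<Longrightarrow> card R < M"
    and E: "subr (E::'a set)" "commset E"
  shows "finite E \<and> card E < M"
proof (rule ccontr)
  assume "\<not> (finite E \<and> card E < M)"
  then obtain S where S: "S \<subseteq> E" "finite S" "card S = M"
  proof (cases "finite E")
    case True
    then have "M \<le> card E" using \<open>\<not> (finite E \<and> card E < M)\<close> by simp
    then show ?thesis using obtain_subset_with_card_n that True by (metis finite_subset)
  next
    case False
    then show ?thesis using infinite_arbitrarily_large that by metis
  qed
  obtain R where R: "subr R" "finite R" "S \<subseteq> R" "R \<subseteq> E" using comm_fin_sub[OF E S(2,1)] by blast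
  have "card S \<le> card R" using R by (intro card_mono) auto
  then show False using bnd[OF R(1,2)] S(3) by simp
qed

lemma no_p_dvd_order:
  assumes a1: "(a::'a)^m = 1" and m0: "m > 0" and minm: "\<And>k. 0 < k \<Longrightarrow> k < m \<Longrightarrow> a^k \<noteq> 1"
  shows "(of_nat m :: 'a) \<noteq> 0"
proof
  assume "(of_nat m :: 'a) = 0"
  then have "CHAR('a) dvd m" by (simp add: of_nat_eq_0_iff_char_dvd)
  then obtain k where k: "m = CHAR('a) * k" by blast
  have pr: "prime CHAR('a)" using CHAR_prime[OF ch] .
  then have p2: "CHAR('a) \<ge> 2" using prime_ge_2_nat by blast
  have k0: "k > 0" using k m0 by (cases k) auto
  have km: "k < m" using k k0 p2 by simp
  define b where "b = a^k"
  have b1: "b \<noteq> 1" unfolding b_def using minm k0 km by blast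
  have "b^CHAR('a) = 1" unfolding b_def using a1 k by (simp add: power_mult[symmetric] mult.commute)
  moreover have "b = 1 + (b - 1)" by simp
  ultimately have "(1 + (b - 1))^CHAR('a) = 1" by simp
  moreover have "(1 + (b - 1))^CHAR('a) = 1 + (b - 1)^CHAR('a)" by (rule frob_one_plus[OF ch])
  ultimately have "1 + (b - 1)^CHAR('a) = 1 + 0" by simp
  then have "(b - 1)^CHAR('a) = 0" by (rule add_left_imp_eq)
  then have "b - 1 = 0" using power_eq_0 by simp
  then show False using b1 by simp
qed

lemma eigen_finite:
  assumes E: "subr E" and a: "a \<in> E" "(a::'a) \<noteq> 0" and C: "finite {x\<in>E. x*a = a*x}"
  shows "finite E"
proof -
  have "\<exists>m>0. a^m = 1" using tor a(2) by blast
  define m where "m = (LEAST m. m > 0 \<and> a^m = 1)"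
  have m: "m > 0" "a^m = 1" using LeastI_ex[OF \<open>\<exists>m>0. a^m = 1\<close>] unfolding m_def by auto
  have minm: "a^k \<noteq> 1" if "0 < k" "k < m" for k
    using not_less_Least[of k "\<lambda>m. m > 0 \<and> a^m = 1"] that unfolding m_def by auto
  have mnz: "(of_nat m :: 'a) \<noteq> 0" using no_p_dvd_order[OF m(2) m(1) minm] by blast
  have pm: "a^k = a^(k mod m)" for k using power_mod_exp[OF m(2)] .
  define u where "u i w = (\<Sum>j<m. a^((m - i) * j) * w * a^j)" for i w
  have eig: "u i w * a = a^i * u i w" if "i < m" for i w
  proof -
    let ?G = "\<lambda>j. a^(i + (m - i) * j) * w * a^j"
    have "a^i * u i w = (\<Sum>j<m. ?G j)"
      unfolding u_def sum_distrib_left by (rule sum.cong) (simp_all add: power_add mult.assoc)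
    also have "\<dots> = (\<Sum>j<m. ?G ((j+1) mod m))" by (rule sum_mod_shift[OF m(1), symmetric])
    also have "\<dots> = (\<Sum>j<m. a^((m - i) * j) * w * a^(Suc j))"
    proof (rule sum.cong)
      fix j assume "j \<in> {..<m}"
      have e1: "a^((j+1) mod m) = a^(Suc j)" using pm[of "Suc j"] by simp
      have "(i + (m - i) * ((j+1) mod m)) mod m = (i + (m - i) * (j+1)) mod m"
        by (metis mod_add_right_eq mod_mult_right_eq)
      also have "i + (m - i) * (j+1) = (m - i) * j + m"
      proof -
        have "(m - i) * (j+1) = (m - i) * j + (m - i)" by simp
        then show ?thesis using that by simp
      qed
      also have "((m - i) * j + m) mod m = ((m - i) * j) mod m" by simp
      finally have "a^(i + (m - i) * ((j+1) mod m)) = a^((m - i) * j)"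
        using pm[of "i + (m - i) * ((j+1) mod m)"] pm[of "(m - i) * j"] by simp
      then show "?G ((j+1) mod m) = a^((m - i) * j) * w * a^(Suc j)" using e1 by simp
    qed simp
    also have "\<dots> = u i w * a" unfolding u_def sum_distrib_right
    proof (rule sum.cong)
      fix j show "a ^ ((m - i) * j) * w * a ^ Suc j = a ^ ((m - i) * j) * w * a ^ j * a"
        by (simp only: power_Suc2 mult.assoc)
    qed simp
    finally show ?thesis by simp
  qed
  have coef: "(\<Sum>i<m. a^((m - i) * j)) = 0" if "0 < j" "j < m" for j
  proof -
    define b where "b = a^j"
    have b1: "b \<noteq> 1" unfolding b_def using minm that by blast
    have "(a^j)^m = a^(j*m)" by (rule power_mult[symmetric])
    also have "\<dots> = (a^m)^j" by (simp only: mult.commute[of j m] power_mult)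
    finally have bm: "b^m = 1" unfolding b_def using m(2) by simp
    have "(1 - b) * (\<Sum>i<m. b^i) = 0" using geo_sum[of b m] bm by simp
    then have s0: "(\<Sum>i<m. b^i) = 0" using b1 mult_eq_0 by simp
    have "(\<Sum>i<m. a^((m - i) * j)) = (\<Sum>i<m. b^(m - i))"
      unfolding b_def by (rule sum.cong) (simp_all only: mult.commute[of "m - i" j for i] power_mult)
    also have "\<dots> = (\<Sum>i<m. b^(Suc (m - Suc i)))"
      by (rule sum.cong) (simp_all add: Suc_diff_Suc)
    also have "\<dots> = (\<Sum>i<m. b^(Suc i))" by (rule sum.nat_diff_reindex)
    also have "\<dots> = b * (\<Sum>i<m. b^i)" by (simp add: sum_distrib_left)
    finally show ?thesis using s0 by simp
  qed
  have sumu: "(\<Sum>i<m. u i w) = of_nat m * w" for w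
  proof -
    have "(\<Sum>i<m. u i w) = (\<Sum>j<m. (\<Sum>i<m. a^((m - i) * j)) * w * a^j)"
      unfolding u_def by (subst sum.swap) (simp add: sum_distrib_right)
    also have "\<dots> = (\<Sum>j<m. if j = 0 then of_nat m * w else 0)"
    proof (rule sum.cong)
      fix j assume "j \<in> {..<m}"
      then show "(\<Sum>i<m. a^((m - i) * j)) * w * a^j = (if j = 0 then of_nat m * w else 0)"
        using coef[of j] by auto
    qed simp
    also have "\<dots> = of_nat m * w" using m(1) by simp
    finally show ?thesis .
  qed
  have uE: "u i w \<in> E" if "w \<in> E" for i w
    unfolding u_def using that a E
    by (intro subr_sum[OF E]) (auto intro!: subr_mult[OF E] subr_power[OF E])
  define K where "K i = {v\<in>E. v * a = a^i * v}" for i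
  have Kfin: "finite (K i)" for i
  proof (cases "K i \<subseteq> {0}")
    case True then show ?thesis using finite_subset by blast
  next
    case False
    then obtain v0 where v0: "v0 \<in> E" "v0 * a = a^i * v0" "v0 \<noteq> 0" unfolding K_def by auto
    obtain y0 where y0: "y0 \<in> E" "v0 * y0 = 1" "y0 * v0 = 1" using inv_in[OF E v0(1,3)] by blast
    have ay0: "a * y0 = y0 * a^i"
    proof -
      have "y0 * (v0 * a) * y0 = y0 * (a^i * v0) * y0" using v0(2) by simp
      then show ?thesis using y0 by (simp add: mult.assoc[symmetric]) (simp add: mult.assoc)
    qed
    have "(\<lambda>v. y0 * v) ` K i \<subseteq> {x\<in>E. x*a = a*x}"
    proof
      fix x assume "x \<in> (\<lambda>v. y0 * v) ` K i"
      then obtain v where v: "v \<in> E" "v * a = a^i * v" "x = y0 * v" unfolding K_def by auto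
      have "x * a = y0 * a^i * v" using v by (simp add: mult.assoc)
      also have "\<dots> = a * x" using ay0 v(3) by (simp add: mult.assoc[symmetric])
      finally show "x \<in> {x\<in>E. x*a = a*x}" using v y0 subr_mult[OF E] by auto
    qed
    moreover have "inj_on (\<lambda>v. y0 * v) (K i)"
    proof (rule inj_onI)
      fix x y assume "y0 * x = y0 * y"
      then have "v0 * (y0 * x) = v0 * (y0 * y)" by simp
      then show "x = y" using y0 by (simp add: mult.assoc[symmetric])
    qed
    ultimately show ?thesis using C finite_imageD finite_subset by blast
  qed
  define Phi where "Phi w = restrict (\<lambda>i. u i w) {..<m}" for w
  have "Phi ` E \<subseteq> PiE {..<m} K"
  proof
    fix f assume "f \<in> Phi ` E"
    then obtain w where w: "w \<in> E" "f = Phi w" by blast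
    show "f \<in> PiE {..<m} K" unfolding w Phi_def
    proof (rule restrict_PiE_iff[THEN iffD2], intro ballI)
      fix i assume "i \<in> {..<m}"
      then show "u i w \<in> K i" unfolding K_def using uE[OF w(1)] eig[of i w] by auto
    qed
  qed
  moreover have "finite (PiE {..<m} K)" using Kfin by (intro finite_PiE) auto
  moreover have "inj_on Phi E"
  proof (rule inj_onI)
    fix w w' assume "w \<in> E" "w' \<in> E" "Phi w = Phi w'"
    have "\<forall>i<m. u i w = u i w'"
    proof (intro allI impI)
      fix i assume "i < m"
      have "Phi w i = Phi w' i" using \<open>Phi w = Phi w'\<close> by simp
      then show "u i w = u i w'" using \<open>i < m\<close> unfolding Phi_def by simp
    qed
    then have "(\<Sum>i<m. u i w) = (\<Sum>i<m. u i w')" by (intro sum.cong) auto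
    then have "of_nat m * w = of_nat m * w'" using sumu by simp
    then show "w = w'" using cancel_left mnz by blast
  qed
  ultimately show ?thesis using finite_imageD finite_subset by blast
qed

end


definition Zc :: "'a::ring_1 set \<Rightarrow> 'a set" where
  "Zc E = {z\<in>E. \<forall>x\<in>E. z * x = x * z}"

lemma subr_Zc: assumes E: "subr E" shows "subr (Zc E)"
  unfolding subr_def
proof (intro conjI ballI)
  show "1 \<in> Zc E" using subr_one[OF E] unfolding Zc_def by simp
next
  fix x y assume x: "x \<in> Zc E" and y: "y \<in> Zc E"
  have xE: "x \<in> E" and xc: "\<And>z. z \<in> E \<Longrightarrow> x * z = z * x" using x unfolding Zc_def by blast+
  have yE: "y \<in> E" and yc: "\<And>z. z \<in> E \<Longrightarrow> y * z = z * y" using y unfolding Zc_def by blast+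
  have "(x + y) * z = z * (x + y)" if "z \<in> E" for z
    unfolding distrib_left distrib_right using xc[OF that] yc[OF that] by simp
  then show "x + y \<in> Zc E" using subr_add[OF E xE yE] unfolding Zc_def by blast
  have "x * y * z = z * (x * y)" if "z \<in> E" for z
  proof -
    have "x * y * z = x * (y * z)" by (simp only: mult.assoc)
    also have "\<dots> = x * (z * y)" using yc[OF that] by (simp only:)
    also have "\<dots> = (x * z) * y" by (simp only: mult.assoc)
    also have "\<dots> = (z * x) * y" using xc[OF that] by (simp only:)
    also have "\<dots> = z * (x * y)" by (simp only: mult.assoc)
    finally show ?thesis .
  qed
  then show "x * y \<in> Zc E" using subr_mult[OF E xE yE] unfolding Zc_def by blast
next
  fix x assume x: "x \<in> Zc E"
  have xE: "x \<in> E" and xc: "\<And>z. z \<in> E \<Longrightarrow> x * z = z * x" using x unfolding Zc_def by blast+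
  have "-x * z = z * -x" if "z \<in> E" for z using xc[OF that] by simp
  then show "-x \<in> Zc E" using subr_uminus[OF E xE] unfolding Zc_def by blast
qed

lemma commset_Zc: "commset (Zc E)"
  unfolding commset_def Zc_def by blast

lemma subr_centralizer:
  assumes E: "subr E" shows "subr {x\<in>E. x * a = a * x}"
  unfolding subr_def
proof (intro conjI ballI)
  show "1 \<in> {x\<in>E. x * a = a * x}" using subr_one[OF E] by simp
next
  fix x y assume x: "x \<in> {x\<in>E. x * a = a * x}" and y: "y \<in> {x\<in>E. x * a = a * x}"
  then show "x + y \<in> {x\<in>E. x * a = a * x}" using subr_add[OF E] by (auto simp: distrib_left distrib_right)
  have "x * y * a = x * (y * a)" by (simp only: mult.assoc)
  also have "\<dots> = x * (a * y)" using y by simp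
  also have "\<dots> = (x * a) * y" by (simp only: mult.assoc)
  also have "\<dots> = a * (x * y)" using x by (simp add: mult.assoc)
  finally show "x * y \<in> {x\<in>E. x * a = a * x}" using x y subr_mult[OF E] by simp
next
  fix x assume "x \<in> {x\<in>E. x * a = a * x}"
  then show "-x \<in> {x\<in>E. x * a = a * x}" using subr_uminus[OF E] by simp
qed

lemma (in rdom) subring_config:
  assumes "subr R" "finite (R::'a set)"
  shows "good_config R R R"
  unfolding good_config_def
proof (intro conjI ballI impI)
  show "finite R" "finite R" "finite R" by (fact assms(2))+
  show "R \<noteq> {}" using subr_one[OF assms(1)] by blast
  show "card R \<le> 4 * card R" "card R \<le> card R" by simp_all
  have "card R > 0" using subr_one[OF assms(1)] assms(2) card_gt_0_iff by blast
  then have "card R \<ge> 1" by simp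
  then show "card R \<le> 4 * card R ^ 2" by (simp add: power2_eq_square)
next
  fix a x b assume "a \<in> R" "x \<in> R" "b \<in> R"
  then show "a * x + b \<in> R" using assms(1) by (intro subr_add subr_mult)
next
  fix a a' x x' assume "a \<in> R" "a' \<in> R" "x \<in> R" "x' \<in> R" "x \<noteq> x'" "a * (x - x') = a' * (x - x')"
  then show "a = a'" using K22_dom[of a x x' a'] by simp
qed

context rtor
begin

lemma all_subr_finite:
  assumes bnd: "\<And>R::'a set. subr R \<Longrightarrow> finite R \<Longrightarrow> card R < M"
  shows "subr (E::'a set) \<Longrightarrow> finite E"
proof (induction "M - card (Zc E)" arbitrary: E rule: less_induct)
  case less
  have Z: "finite (Zc E) \<and> card (Zc E) < M"
    using comm_bounded[OF bnd subr_Zc[OF less.prems] commset_Zc] .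
  show "finite E"
  proof (cases "commset E")
    case True
    then show ?thesis using comm_bounded[OF bnd less.prems] by blast
  next
    case False
    then obtain a y where ay: "a \<in> E" "y \<in> E" "a * y \<noteq> y * a" unfolding commset_def by blast
    have aZ: "a \<notin> Zc E" using ay unfolding Zc_def by blast
    define E' where "E' = {x\<in>E. x * a = a * x}"
    have sE': "subr E'" unfolding E'_def by (rule subr_centralizer[OF less.prems])
    have ZZ: "Zc E \<subseteq> Zc E'" unfolding Zc_def E'_def using ay(1) by auto
    have aZ': "a \<in> Zc E'" unfolding Zc_def E'_def using ay(1) by auto
    have Z': "finite (Zc E') \<and> card (Zc E') < M"
      using comm_bounded[OF bnd subr_Zc[OF sE'] commset_Zc] .
    have "Zc E \<subset> Zc E'" using ZZ aZ aZ' by blast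
    then have "card (Zc E) < card (Zc E')" using Z' by (intro psubset_card_mono) auto
    then have "M - card (Zc E') < M - card (Zc E)" using Z' by linarith
    then have "finite E'" using less.hyps sE' by blast
    moreover have "a \<noteq> 0"
    proof
      assume "a = 0"
      then have "a \<in> Zc E" unfolding Zc_def using ay(1) by simp
      then show False using aZ by simp
    qed
    ultimately show ?thesis using eigen_finite[OF less.prems ay(1)] unfolding E'_def by blast
  qed
qed

end


theorem proposition3p8:
  assumes "CHAR('a::ring_1) = 0 \<or> (infinite (UNIV :: 'a set) \<and> no_zero_divisors_ring TYPE('a))"
  shows "\<not> ring_near_linear_zarankiewicz TYPE('a)"
proof (cases "CHAR('a) = 0")
  case True
  then show ?thesis using char0_configs[OF True] by (intro no_nlz_from_configs) blast
next
  case False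
  then have inf: "infinite (UNIV :: 'a set)" and nzd: "no_zero_divisors_ring TYPE('a)" using assms by auto
  interpret rdom "TYPE('a)"
    by unfold_locales (use nzd in \<open>auto simp: no_zero_divisors_ring_def\<close>)
  show ?thesis
  proof (cases "\<exists>t::'a. t \<noteq> 0 \<and> (\<forall>n>0. t^n \<noteq> 1)")
    case True
    then obtain t :: 'a where t: "t \<noteq> 0" "\<And>n. n > 0 \<Longrightarrow> t^n \<noteq> 1" by blast
    show ?thesis using nontorsion_configs[OF False t] by (intro no_nlz_from_configs) blast
  next
    case nt: False
    interpret rtor "TYPE('a)"
      by unfold_locales (use False nt in auto)
    show ?thesis
    proof (cases "\<forall>M. \<exists>R::'a set. subr R \<and> finite R \<and> M \<le> card R")
      case True
      show ?thesis
      proof (rule no_nlz_from_configs)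
        fix K
        obtain R :: "'a set" where R: "subr R" "finite R" "K \<le> card R" using True by blast
        then show "\<exists>X B Y :: 'a set. good_config X B Y \<and> K \<le> card X"
          using subring_config[OF R(1,2)] by blast
      qed
    next
      case False
      then obtain M where M: "\<And>R::'a set. subr R \<Longrightarrow> finite R \<Longrightarrow> card R < M"
        by (metis not_le)
      have "finite (UNIV :: 'a set)" using all_subr_finite[OF M subr_UNIV] .
      then show ?thesis using inf by simp
    qed
  qed
qed


end
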